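(* Let $s\in(0,1)$ and let $\Omega\subset\mathbb{R}^d$ be a bounded Lipschitz domain satisfying the uniform exterior ball condition. Let $\{D_\varepsilon\}_{0<\varepsilon<\varepsilon_0}$ be a family of $C^\infty$-domains and $\lambda>1$ such that: (i) $D_\varepsilon\subset D_{\varepsilon'}\Subset\Omega$ for $0<\varepsilon'<\varepsilon<\varepsilon_0$ and $\bigcup_{0<\varepsilon<\varepsilon_0}D_\varepsilon=\Omega$; (ii) the $D_\varepsilon$ satisfy the uniform exterior ball condition with a radius independent of $\varepsilon$; (iii) $\varepsilon\le\mathrm{dist}(\partial D_\varepsilon,\partial\Omega)$ and $\sup\{\mathrm{dist}(x,\partial\Omega):x\in\partial D_\varepsilon\}\le\lambda\varepsilon$ for all $0<\varepsilon<\varepsilon_0$. Fix a nonnegative $\eta\in C_c^\infty(\mathbb{R}^d)$ with $\|\eta\|_{L^1}=1$ and $\mathrm{supp}\,\eta=\overline{B_1(0)}$, and set $\eta_\varepsilon=\varepsilon^{-d}\eta(\cdot/\varepsilon)$. Then there exists a constant $C>0$ such that $$\sup\Big\{\big(\mathrm{dist}(\cdot,\partial D_\varepsilon)^{-s}*\eta_\varepsilon\big)(x)\ :\ x\in\Omega,\ \mathrm{dist}(x,\partial\Omega)<(1+\lambda)\varepsilon\Big\}\le C\varepsilon^{-s}$$ for all $0<\varepsilon<\varepsilon_0$.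
   Context: Uniform exterior ball condition: there is $\rho>0$ such that for each $x\in\partial D$ there is a ball $B\subset\overline D^c$ of radius $\rho$ with $\overline B\cap\overline D=\{x\}$. $\mathrm{dist}(A,B)=\inf\{\mathrm{dist}(x,B):x\in A\}$. (Such families $\{D_\varepsilon\}$ exist for every bounded Lipschitz domain with the uniform exterior ball condition.) *)

theory Defs
  imports "HOL-Analysis.Analysis"
begin

fun Ck :: "nat \<Rightarrow> ('a::real_normed_vector \<Rightarrow> real) \<Rightarrow> bool" where
  "Ck 0 f = continuous_on UNIV f"
| "Ck (Suc k) f = (f differentiable_on UNIV \<and>
      (\<forall>v. Ck k (\<lambda>x. frechet_derivative f (at x) v)))"

definition smooth_fun :: "('a::real_normed_vector \<Rightarrow> real) \<Rightarrow> bool" where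
  "smooth_fun f \<longleftrightarrow> (\<forall>k. Ck k f)"

definition is_domain :: "'a::euclidean_space set \<Rightarrow> bool" where
  "is_domain U \<longleftrightarrow> open U \<and> connected U \<and> U \<noteq> {}"

text \<open>Boundary locally the subgraph of a function of the hyperplane coordinates
  orthogonal to a unit direction e (coordinate rotation).\<close>
definition lipschitz_domain :: "'a::euclidean_space set \<Rightarrow> bool" where
  "lipschitz_domain U \<longleftrightarrow> is_domain U \<and>
     (\<forall>x\<in>frontier U. \<exists>r>0. \<exists>e g L. norm e = 1 \<and> L-lipschitz_on UNIV g \<and>
        U \<inter> ball x r = {y \<in> ball x r. y \<bullet> e < g (y - (y \<bullet> e) *\<^sub>R e)})"

definition smooth_domain :: "'a::euclidean_space set \<Rightarrow> bool" where
  "smooth_domain U \<longleftrightarrow> is_domain U \<and>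
     (\<forall>x\<in>frontier U. \<exists>r>0. \<exists>e g. norm e = 1 \<and> smooth_fun g \<and>
        U \<inter> ball x r = {y \<in> ball x r. y \<bullet> e < g (y - (y \<bullet> e) *\<^sub>R e)})"

definition exterior_ball_radius :: "'a::euclidean_space set \<Rightarrow> real \<Rightarrow> bool" where
  "exterior_ball_radius U \<rho> \<longleftrightarrow>
     (\<forall>x\<in>frontier U. \<exists>c. ball c \<rho> \<subseteq> - closure U \<and> cball c \<rho> \<inter> closure U = {x})"

definition uniform_exterior_ball :: "'a::euclidean_space set \<Rightarrow> bool" where
  "uniform_exterior_ball U \<longleftrightarrow> (\<exists>\<rho>>0. exterior_ball_radius U \<rho>)"

definition compactly_contained :: "'a::euclidean_space set \<Rightarrow> 'a set \<Rightarrow> bool" where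
  "compactly_contained A B \<longleftrightarrow> compact (closure A) \<and> closure A \<subseteq> B"

end

theory Submission
  imports Defs
begin

lemma emeasure_translate:
  fixes S :: "'a::euclidean_space set"
  assumes "S \<in> sets lborel"
  shows "emeasure lborel ((+) a ` S) = emeasure lborel S"
proof -
  have m: "(+) a ` S \<in> sets lborel"
  proof -
    have "(+) a ` S = (+) (-a) -` S" by (auto simp: image_iff algebra_simps) (metis add.commute diff_add_cancel diff_conv_add_uminus)
    moreover have "(+) (-a) -` S \<in> sets lborel"
      using measurable_sets[OF _ assms, of "(+) (-a)" lborel] by simp
    ultimately show ?thesis by simp
  qed
  have "emeasure lborel ((+) a ` S) = emeasure (distr lborel borel ((+) a)) ((+) a ` S)"
    by (simp add: lborel_distr_plus)
  also have "\<dots> = emeasure lborel ((+) a -` ((+) a ` S) \<inter> space lborel)"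
    using m by (intro emeasure_distr) auto
  also have "(+) a -` ((+) a ` S) \<inter> space lborel = S" by auto
  finally show ?thesis .
qed

lemma pack:
  fixes S :: "'a::euclidean_space set"
  assumes S: "S \<in> sets lborel" "S \<subseteq> cball x R" and L: "L > 0" and N: "real N * L \<le> R"
    and e: "norm e = 1"
    and line: "\<And>y k. y \<in> S \<Longrightarrow> 1 \<le> k \<Longrightarrow> k < N \<Longrightarrow> y + (real k * L) *\<^sub>R e \<notin> S"
  shows "of_nat N * emeasure lborel S \<le> emeasure lborel (cball x (2*R))"
proof -
  define T where "T k = (+) ((real k * L) *\<^sub>R e) ` S" for k
  have Tm: "T k \<in> sets lborel" for k
  proof -
    have "T k = (+) (- (real k * L) *\<^sub>R e) -` S" unfolding T_def
      by (auto simp: image_iff algebra_simps) (metis add.commute diff_add_cancel diff_conv_add_uminus)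
    thus ?thesis using measurable_sets[OF _ S(1), of "(+) (- (real k * L) *\<^sub>R e)" lborel] by simp
  qed
  have TS: "emeasure lborel (T k) = emeasure lborel S" for k
    unfolding T_def by (rule emeasure_translate[OF S(1)])
  have disj: "disjoint_family_on T {..<N}"
  unfolding disjoint_family_on_def
  proof (intro ballI impI)
    fix i j assume ij: "i \<in> {..<N}" "j \<in> {..<N}" "i \<noteq> j"
    show "T i \<inter> T j = {}"
    proof (rule ccontr)
      assume "T i \<inter> T j \<noteq> {}"
      then obtain y z where y: "y \<in> S" "z \<in> S" "(real i * L) *\<^sub>R e + y = (real j * L) *\<^sub>R e + z"
        unfolding T_def by auto
      show False
      proof (cases "i < j")
        case True
        have "y = z + (real (j - i) * L) *\<^sub>R e" using y(3) True
          by (simp add: of_nat_diff algebra_simps)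
        moreover have "1 \<le> j - i" "j - i < N" using True ij by auto
        ultimately show False using line[of z "j - i"] y True by (auto simp: of_nat_diff)
      next
        case False
        hence "j < i" using ij by auto
        have "z = y + (real (i - j) * L) *\<^sub>R e" using y(3) \<open>j < i\<close>
          by (simp add: of_nat_diff algebra_simps)
        moreover have "1 \<le> i - j" "i - j < N" using \<open>j < i\<close> ij by auto
        ultimately show False using line[of y "i - j"] y \<open>j < i\<close> by (auto simp: of_nat_diff)
      qed
    qed
  qed
  have sub: "(\<Union>k\<in>{..<N}. T k) \<subseteq> cball x (2*R)"
  proof
    fix w assume "w \<in> (\<Union>k\<in>{..<N}. T k)"
    then obtain k y where k: "k < N" "y \<in> S" "w = (real k * L) *\<^sub>R e + y" unfolding T_def by auto
    have "dist x y \<le> R" using S(2) k by auto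
    moreover have "norm ((real k * L) *\<^sub>R e) \<le> R"
    proof -
      have "real k * L \<le> real N * L" using k L by (intro mult_right_mono) auto
      hence "real k * L \<le> R" using N by linarith
      thus ?thesis using e L by (simp add: abs_mult)
    qed
    ultimately have "dist x w \<le> 2 * R" using k(3)
      by (smt (verit, best) dist_commute dist_norm dist_triangle norm_minus_commute add_diff_cancel)
    thus "w \<in> cball x (2*R)" by simp
  qed
  have "of_nat N * emeasure lborel S = (\<Sum>k\<in>{..<N}. emeasure lborel (T k))"
    by (simp add: TS)
  also have "\<dots> = emeasure lborel (\<Union>k\<in>{..<N}. T k)"
    using Tm disj by (intro sum_emeasure) auto
  also have "\<dots> \<le> emeasure lborel (cball x (2*R))"
    using sub by (intro emeasure_mono) auto
  finally show ?thesis .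
qed


lemma smooth_cont: "smooth_fun g \<Longrightarrow> continuous_on UNIV g"
  unfolding smooth_fun_def by (metis Ck.simps(1))

lemma smooth_diff: "smooth_fun g \<Longrightarrow> g differentiable (at z)"
  unfolding smooth_fun_def
  by (metis Ck.simps(2) UNIV_I differentiable_on_def)

lemma norm_diff_sq: "(norm (a - b))^2 = (norm a)^2 - 2 * (a \<bullet> b) + (norm (b::'a::real_inner))^2"
  by (simp add: power2_norm_eq_inner inner_diff_left inner_diff_right inner_commute)

lemma normal_parallel:
  fixes D :: "'a::euclidean_space set"
  assumes sm: "smooth_domain D" and p: "p \<in> frontier D"
   and q1: "dist q1 p = R1" "R1 > 0" "ball q1 R1 \<inter> D = {}"
   and q2: "dist q2 p = R2" "R2 > 0" "ball q2 R2 \<inter> D = {}"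
  shows "q2 - p = (R2/R1) *\<^sub>R (q1 - p)"
proof -
  have oD: "open D" using sm unfolding smooth_domain_def is_domain_def by auto
  obtain r0 e g where r0: "r0 > 0" and e: "norm e = 1" and g: "smooth_fun g"
    and loc: "D \<inter> ball p r0 = {y \<in> ball p r0. y \<bullet> e < g (y - (y \<bullet> e) *\<^sub>R e)}"
    using sm p unfolding smooth_domain_def by blast
  define P where "P y = y - (y \<bullet> e) *\<^sub>R e" for y
  define F where "F y = g (P y) - y \<bullet> e" for y
  have ee: "e \<bullet> e = 1" using e by (simp add: norm_eq_sqrt_inner)
  have gc: "continuous_on UNIV g" using smooth_cont[OF g] .
  have Pc: "continuous_on UNIV P" unfolding P_def by (intro continuous_intros)
  have Fc: "continuous_on UNIV F" unfolding F_def
    by (intro continuous_intros continuous_on_compose2[OF gc Pc]) auto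
  obtain g' where g': "(g has_derivative g') (at (P p))"
    using smooth_diff[OF g] unfolding differentiable_def by blast
  define F' where "F' v = g' (P v) - v \<bullet> e" for v
  have Pd: "(P has_derivative P) (at p)" unfolding P_def
    by (auto intro!: derivative_eq_intros)
  have Fd: "(F has_derivative F') (at p)"
  proof -
    have "((\<lambda>y. g (P y)) has_derivative (\<lambda>v. g' (P v))) (at p)"
      using has_derivative_compose[OF Pd g'] by (simp add: o_def)
    thus ?thesis unfolding F_def F'_def by (auto intro!: derivative_eq_intros)
  qed
  have blF': "bounded_linear F'" using has_derivative_bounded_linear[OF Fd] .
  have lF': "linear F'" using blF' bounded_linear.linear by blast
  have Pe: "P e = 0" unfolding P_def using ee by simp
  have g'0: "g' 0 = 0" using has_derivative_bounded_linear[OF g'] linear_simps(3) bounded_linear.linear by blast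
  have F'e: "F' e = -1" unfolding F'_def using Pe g'0 ee by simp
  have pnD: "p \<notin> D" using p oD by (simp add: frontier_def interior_open)
  have Fp_le: "F p \<le> 0" using pnD loc r0 unfolding F_def P_def by auto
  have Fp: "F p = 0"
  proof (rule ccontr)
    assume "F p \<noteq> 0" hence neg: "F p < 0" using Fp_le by simp
    define U where "U = {y. F y < 0} \<inter> ball p r0"
    have "open {y. F y < 0}" using open_Collect_less[OF Fc continuous_on_const] by simp
    hence "open U" unfolding U_def by (intro open_Int open_ball)
    moreover have "p \<in> U" using neg r0 unfolding U_def by simp
    moreover have "p \<in> closure D" using p by (simp add: frontier_def)
    ultimately obtain y where "y \<in> U" "y \<in> D"
      using open_Int_closure_eq_empty[of U D] by blast
    hence "y \<in> D \<inter> ball p r0" unfolding U_def by auto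
    hence "y \<bullet> e < g (P y)" using loc unfolding P_def by blast
    thus False using \<open>y \<in> U\<close> unfolding U_def F_def by auto
  qed
  have key: "\<forall>v. F' v > 0 \<longrightarrow> (q - p) \<bullet> v \<le> 0" if q: "dist q p = R" "R > 0" "ball q R \<inter> D = {}" for q R
  proof (intro allI impI, rule ccontr)
    fix v assume Fv: "F' v > 0" and "\<not> (q - p) \<bullet> v \<le> 0"
    hence wv: "(q - p) \<bullet> v > 0" by simp
    have "((\<lambda>t. F (p + t *\<^sub>R v)) has_derivative (\<lambda>t. F' (t *\<^sub>R v))) (at 0)"
    proof -
      have "((\<lambda>t::real. p + t *\<^sub>R v) has_derivative (\<lambda>t. t *\<^sub>R v)) (at 0)"
        by (auto intro!: derivative_eq_intros)
      from has_derivative_compose[OF this] Fd show ?thesis by (simp add: o_def)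
    qed
    hence "((\<lambda>t. F (p + t *\<^sub>R v)) has_real_derivative F' v) (at 0)"
    proof -
      have eqf: "(\<lambda>t. F' (t *\<^sub>R v)) = (*) (F' v)"
        by (rule ext) (simp add: linear_scale[OF lF'] mult.commute)
      show ?thesis unfolding has_field_derivative_def using \<open>((\<lambda>t. F (p + t *\<^sub>R v)) has_derivative _) _\<close> eqf by simp
    qed
    from DERIV_pos_inc_right[OF this Fv] obtain d where d: "d > 0"
      and dd: "\<And>h. h > 0 \<Longrightarrow> h < d \<Longrightarrow> F p < F (p + h *\<^sub>R v)" by auto
    define h where "h = min (d/2) (min (r0 / (2 * (norm v + 1))) (((q - p) \<bullet> v) / (norm v ^ 2 + 1)))"
    have a1: "r0 / (2 * (norm v + 1)) > 0" using r0 by (intro divide_pos_pos) (simp_all add: add_nonneg_pos)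
    have a2: "((q - p) \<bullet> v) / (norm v ^ 2 + 1) > 0" using wv by (intro divide_pos_pos) (simp_all add: add_nonneg_pos)
    have h0: "h > 0" unfolding h_def using d a1 a2 by simp
    have hd: "h < d" unfolding h_def using d by simp
    have hr: "h * norm v < r0"
    proof -
      have "h \<le> r0 / (2 * (norm v + 1))" unfolding h_def by simp
      moreover have pos: "0 < 2 * (norm v + 1)" by (simp add: add_nonneg_pos)
      ultimately have "h * (2 * (norm v + 1)) \<le> r0" using pos_le_divide_eq[OF pos] by blast
      moreover have "h * norm v < h * (2 * (norm v + 1))" using h0 norm_ge_zero[of v]
        by (intro mult_strict_left_mono) (simp_all add: algebra_simps add_nonneg_pos)
      ultimately show ?thesis by linarith
    qed
    have hw: "h * (norm v ^ 2 + 1) \<le> (q - p) \<bullet> v"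
    proof -
      have "h \<le> ((q - p) \<bullet> v) / (norm v ^ 2 + 1)" unfolding h_def by simp
      moreover have pos: "0 < norm v ^ 2 + 1" by (simp add: add_nonneg_pos)
      ultimately show ?thesis using pos_le_divide_eq[OF pos] by blast
    qed
    define y where "y = p + h *\<^sub>R v"
    have yb: "y \<in> ball p r0" unfolding y_def using hr h0 by (simp add: dist_norm)
    have "F y > 0" using dd[OF h0 hd] Fp unfolding y_def by simp
    hence yD: "y \<in> D" using loc yb unfolding F_def P_def by auto
    have "y - q = h *\<^sub>R v - (q - p)" unfolding y_def by (simp add: algebra_simps)
    hence "(norm (y - q))^2 = (norm (h *\<^sub>R v - (q - p)))^2" by (simp only:)
    also have "\<dots> = h^2 * (norm v)^2 - 2 * h * ((q - p) \<bullet> v) + (norm (q - p))^2"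
      unfolding norm_diff_sq by (simp add: power_mult_distrib inner_commute)
    also have "(norm (q - p)) = R" using q(1) by (simp add: dist_norm)
    finally have eq: "(norm (y - q))^2 = h^2 * (norm v)^2 - 2 * h * ((q - p) \<bullet> v) + R^2" .
    have "h^2 * (norm v)^2 - 2 * h * ((q - p) \<bullet> v) < 0"
    proof -
      have "h * (norm v)^2 + h \<le> (q - p) \<bullet> v" using hw by (simp add: algebra_simps)
      hence "h * (norm v)^2 < (q - p) \<bullet> v" using h0 by linarith
      hence 1: "h * (h * (norm v)^2) < h * ((q - p) \<bullet> v)" using h0 by simp
      have 2: "h * ((q - p) \<bullet> v) > 0" using h0 wv by simp
      have 3: "h^2 * (norm v)^2 = h * (h * (norm v)^2)" by (simp add: power2_eq_square)
      show ?thesis using 1 2 3 by linarith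
    qed
    hence "(norm (y - q))^2 < R^2" using eq by simp
    hence "norm (y - q) < R" using q(2) power_less_imp_less_base[of "norm (y - q)" 2 R] by linarith
    hence "y \<in> ball q R" by (simp add: dist_norm norm_minus_commute)
    thus False using yD q(3) by blast
  qed
  have formula: "\<forall>v. (q - p) \<bullet> v = - F' v * ((q - p) \<bullet> e) \<and> (q - p) \<bullet> e \<ge> 0"
    if q: "dist q p = R" "R > 0" "ball q R \<inter> D = {}" for q R
  proof
    fix v
    define w where "w = q - p"
    have K: "\<And>v. F' v > 0 \<Longrightarrow> w \<bullet> v \<le> 0" using key[OF q] unfolding w_def by blast
    have we: "w \<bullet> e \<ge> 0" using K[of "-e"] F'e lF' by (simp add: linear_neg[OF lF'] linear_add[OF lF'] linear_diff[OF lF'] linear_scale[OF lF'])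
    define u where "u = v + F' v *\<^sub>R e"
    have Fu: "F' u = 0" unfolding u_def using lF' F'e by (simp add: linear_neg[OF lF'] linear_add[OF lF'] linear_diff[OF lF'] linear_scale[OF lF'])
    have bnd: "\<bar>w \<bullet> u\<bar> \<le> \<delta> * (w \<bullet> e)" if "\<delta> > 0" for \<delta>
    proof -
      have "F' (u - \<delta> *\<^sub>R e) = \<delta>" using lF' Fu F'e by (simp add: linear_neg[OF lF'] linear_add[OF lF'] linear_diff[OF lF'] linear_scale[OF lF'])
      hence a: "w \<bullet> (u - \<delta> *\<^sub>R e) \<le> 0" using K that by simp
      have "F' (- u - \<delta> *\<^sub>R e) = \<delta>" using lF' Fu F'e by (simp add: linear_neg[OF lF'] linear_add[OF lF'] linear_diff[OF lF'] linear_scale[OF lF'])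
      hence b: "w \<bullet> (- u - \<delta> *\<^sub>R e) \<le> 0" using K that by simp
      show ?thesis using a b by (simp add: inner_diff_right)
    qed
    have wu: "w \<bullet> u = 0"
    proof (rule ccontr)
      assume ne: "w \<bullet> u \<noteq> 0"
      define \<delta> where "\<delta> = \<bar>w \<bullet> u\<bar> / (w \<bullet> e + 1)"
      have d0: "\<delta> > 0" unfolding \<delta>_def using ne we by simp
      have "\<delta> * (w \<bullet> e) < \<bar>w \<bullet> u\<bar>"
      proof -
        have "\<delta> * (w \<bullet> e + 1) = \<bar>w \<bullet> u\<bar>" unfolding \<delta>_def using we by simp
        thus ?thesis using d0 by (simp add: algebra_simps)
      qed
      thus False using bnd[OF d0] by simp
    qed
    show "(q - p) \<bullet> v = - F' v * ((q - p) \<bullet> e) \<and> (q - p) \<bullet> e \<ge> 0"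
    proof -
      have "v = u - F' v *\<^sub>R e" unfolding u_def by simp
      hence "w \<bullet> v = w \<bullet> u - F' v * (w \<bullet> e)" by (metis inner_diff_right inner_scaleR_right)
      thus ?thesis using wu we unfolding w_def by simp
    qed
  qed
  define w1 where "w1 = q1 - p"
  define w2 where "w2 = q2 - p"
  have f1: "\<And>v. w1 \<bullet> v = - F' v * (w1 \<bullet> e)" "w1 \<bullet> e \<ge> 0" using formula[OF q1] unfolding w1_def by blast+
  have f2: "\<And>v. w2 \<bullet> v = - F' v * (w2 \<bullet> e)" "w2 \<bullet> e \<ge> 0" using formula[OF q2] unfolding w2_def by blast+
  have n1: "norm w1 = R1" using q1 unfolding w1_def by (simp add: dist_norm)
  have n2: "norm w2 = R2" using q2 unfolding w2_def by (simp add: dist_norm)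
  have "w1 \<noteq> 0" using n1 q1(2) by auto
  hence "w1 \<bullet> w1 > 0" by simp
  moreover have "w1 \<bullet> e = 0 \<Longrightarrow> w1 \<bullet> w1 = 0" using f1(1)[of w1] by simp
  ultimately have "w1 \<bullet> e \<noteq> 0" by auto
  hence w1e: "w1 \<bullet> e > 0" using f1(2) by linarith
  define \<mu> where "\<mu> = (w2 \<bullet> e) / (w1 \<bullet> e)"
  have mu0: "\<mu> \<ge> 0" unfolding \<mu>_def using w1e f2(2) by simp
  have zz: "(w2 - \<mu> *\<^sub>R w1) \<bullet> v = 0" for v
  proof -
    have "(w2 - \<mu> *\<^sub>R w1) \<bullet> v = - F' v * (w2 \<bullet> e) + \<mu> * F' v * (w1 \<bullet> e)"
      using f1(1)[of v] f2(1)[of v] by (simp add: inner_diff_left)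
    also have "\<dots> = 0" unfolding \<mu>_def using w1e by simp
    finally show ?thesis .
  qed
  have "(w2 - \<mu> *\<^sub>R w1) \<bullet> (w2 - \<mu> *\<^sub>R w1) = 0" by (rule zz)
  hence "w2 - \<mu> *\<^sub>R w1 = 0" by (simp only: inner_eq_zero_iff)
  hence w2eq: "w2 = \<mu> *\<^sub>R w1" by simp
  hence "R2 = \<mu> * R1" using n1 n2 mu0 by simp
  hence "\<mu> = R2 / R1" using q1(2) by simp
  thus ?thesis using w2eq unfolding w1_def w2_def by simp
qed


lemma direction_exists:
  fixes v :: "'a::euclidean_space"
  assumes "v \<noteq> 0"
  shows "\<exists>b\<in>Basis. \<exists>\<sigma>\<in>{1::real,-1}. (\<sigma> *\<^sub>R b) \<bullet> v > (1 / (2 * real DIM('a))) * norm v"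
proof (rule ccontr)
  define n where "n = real DIM('a)"
  have n1: "n \<ge> 1" unfolding n_def by (simp add: DIM_positive Suc_le_eq)
  assume nt: "\<not> ?thesis"
  have le: "\<bar>b \<bullet> v\<bar> \<le> (1 / (2 * n)) * norm v" if "b \<in> Basis" for b
  proof -
    have "\<not> ((1::real) *\<^sub>R b) \<bullet> v > (1 / (2 * n)) * norm v" "\<not> ((-1::real) *\<^sub>R b) \<bullet> v > (1 / (2 * n)) * norm v"
      using nt that unfolding n_def by blast+
    thus ?thesis by (simp add: abs_le_iff)
  qed
  have sq: "(b \<bullet> v)^2 \<le> ((1 / (2 * n)) * norm v)^2" if "b \<in> Basis" for b
    using le[OF that] by (metis abs_ge_zero power2_abs power_mono)
  have "(norm v)^2 = (\<Sum>b\<in>Basis. (v \<bullet> b)^2)"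
    unfolding power2_norm_eq_inner by (subst euclidean_inner) (simp add: power2_eq_square)
  also have "\<dots> \<le> (\<Sum>b\<in>(Basis::'a set). ((1 / (2 * n)) * norm v)^2)"
    using sq by (intro sum_mono) (simp add: inner_commute)
  also have "\<dots> = n * ((1 / (2 * n)) * norm v)^2" unfolding n_def by simp
  also have "\<dots> = (norm v)^2 / (4 * n)" using n1 by (simp add: power2_eq_square field_simps)
  finally have "(norm v)^2 \<le> (norm v)^2 / (4 * n)" .
  moreover have "(norm v)^2 > 0" using assms by simp
  ultimately have "(norm v)^2 * (4 * n) \<le> (norm v)^2" using n1 by (simp add: le_divide_eq)
  moreover have "(norm v)^2 * 4 \<le> (norm v)^2 * (4 * n)" using n1 by (intro mult_left_mono) auto
  ultimately show False using \<open>(norm v)^2 > 0\<close> by linarith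
qed

lemma quad:
  fixes u e :: "'a::euclidean_space"
  assumes e: "norm e = 1" and t: "0 < \<tau>" "\<tau> \<le> \<kappa> * norm u" and k: "0 < \<kappa>" "\<kappa> \<le> 1"
    and ue: "u \<bullet> e > \<kappa> * norm u"
  shows "norm (u - \<tau> *\<^sub>R e) < norm u - \<tau> * \<kappa> / 2" "norm u - \<tau> * \<kappa> / 2 > 0"
proof -
  define s where "s = norm u"
  have s0: "s > 0"
  proof (rule ccontr)
    assume "\<not> s > 0" hence "u = 0" unfolding s_def by simp
    thus False using ue by simp
  qed
  have "(norm (u - \<tau> *\<^sub>R e))^2 = s^2 - 2 * (u \<bullet> (\<tau> *\<^sub>R e)) + \<tau>^2"
    unfolding norm_diff_sq s_def using e t by (simp add: power_mult_distrib)
  also have "u \<bullet> (\<tau> *\<^sub>R e) = \<tau> * (u \<bullet> e)" by simp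
  finally have eq: "(norm (u - \<tau> *\<^sub>R e))^2 = s^2 - 2 * (\<tau> * (u \<bullet> e)) + \<tau>^2" .
  have a: "\<tau> * (u \<bullet> e) > \<tau> * (\<kappa> * s)" using ue t unfolding s_def by simp
  have b: "\<tau> * \<tau> \<le> \<tau> * (\<kappa> * s)" using t unfolding s_def by simp
  have c: "0 \<le> (\<tau> * \<kappa> / 2)^2" by simp
  have "(norm (u - \<tau> *\<^sub>R e))^2 < (s - \<tau> * \<kappa> / 2)^2"
    using eq a b c by (simp add: power2_eq_square algebra_simps)
  moreover have pos: "s - \<tau> * \<kappa> / 2 > 0"
  proof -
    have "\<tau> * \<kappa> \<le> (\<kappa> * s) * \<kappa>" using t k by (intro mult_right_mono) (auto simp: s_def)
    also have "\<dots> = s * (\<kappa> * \<kappa>)" by simp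
    also have "\<dots> \<le> s" using k s0 by (intro mult_left_le) (auto simp: mult_le_one)
    finally show ?thesis using s0 by linarith
  qed
  ultimately show "norm (u - \<tau> *\<^sub>R e) < norm u - \<tau> * \<kappa> / 2"
    using power_less_imp_less_base[of "norm (u - \<tau> *\<^sub>R e)" 2 "s - \<tau> * \<kappa> / 2"] unfolding s_def by linarith
  show "norm u - \<tau> * \<kappa> / 2 > 0" using pos unfolding s_def .
qed

lemma cball_measure:
  fixes x :: "'a::euclidean_space"
  assumes "R \<ge> 0"
  shows "emeasure lborel (cball x R) \<le> ennreal ((2 * R) ^ DIM('a))"
proof -
  have "cball x R \<subseteq> cbox (x - R *\<^sub>R One) (x + R *\<^sub>R One)"
  proof
    fix y assume "y \<in> cball x R"
    hence "norm (y - x) \<le> R" by (simp add: dist_norm norm_minus_commute)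
    hence "\<bar>(y - x) \<bullet> b\<bar> \<le> R" if "b \<in> Basis" for b
      using Basis_le_norm[OF that, of "y - x"] by linarith
    thus "y \<in> cbox (x - R *\<^sub>R One) (x + R *\<^sub>R One)"
      by (auto simp: mem_box inner_diff_left abs_le_iff algebra_simps)
  qed
  hence "emeasure lborel (cball x R) \<le> emeasure lborel (cbox (x - R *\<^sub>R One) (x + R *\<^sub>R One))"
    by (intro emeasure_mono) auto
  also have "\<dots> = ennreal ((2 * R) ^ DIM('a))"
    using assms by (simp add: emeasure_lborel_cbox_eq inner_add_left inner_diff_left algebra_simps)
  finally show ?thesis .
qed

lemma infdist_lower:
  fixes D :: "'a::euclidean_space set"
  assumes "ball c \<rho> \<inter> D = {}" "frontier D \<noteq> {}"
  shows "infdist z (frontier D) \<ge> \<rho> - dist z c"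
proof -
  have "ball c \<rho> \<inter> closure D = {}" using assms(1) open_Int_closure_eq_empty[of "ball c \<rho>" D] by simp
  hence "dist c f \<ge> \<rho>" if "f \<in> frontier D" for f
  proof -
    have "f \<in> closure D" using that by (simp add: frontier_def)
    hence "f \<notin> ball c \<rho>" using \<open>ball c \<rho> \<inter> closure D = {}\<close> by blast
    thus ?thesis by (simp add: not_less)
  qed
  hence "\<rho> - dist z c \<le> dist z f" if "f \<in> frontier D" for f
    using that dist_triangle[of c f z] dist_commute[of c z] by fastforce
  thus ?thesis using assms(2) unfolding infdist_notempty[OF assms(2)] by (intro cINF_greatest) auto
qed


lemma set_bound:
  fixes S :: "'a::euclidean_space set"
  assumes S: "S \<in> sets lborel" "S \<subseteq> cball x \<epsilon>"
    and e: "norm e = 1"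
    and k: "\<kappa> = 1 / (2 * real DIM('a))"
    and A: "A = max 1 (4 * real DIM('a) * \<epsilon>0 / \<rho>)"
    and pos: "0 < \<epsilon>" "\<epsilon> < \<epsilon>0" "0 < r" "0 < \<rho>"
    and good: "2 * r / \<kappa> \<le> min \<epsilon> (\<kappa> * \<rho> / 2)"
    and line: "\<And>y \<tau>. y \<in> S \<Longrightarrow> 0 < \<tau> \<Longrightarrow> \<tau> \<le> \<kappa> * \<rho> / 2 \<Longrightarrow> y + \<tau> *\<^sub>R e \<in> S \<Longrightarrow> \<tau> < 2 * r / \<kappa>"
  shows "emeasure lborel S \<le> ennreal (4 ^ DIM('a) * 8 * real DIM('a) * A * r * \<epsilon> ^ (DIM('a) - 1))"
proof -
  define n where "n = real DIM('a)"
  have n1: "n \<ge> 1" unfolding n_def by (simp add: DIM_positive Suc_le_eq)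
  have k0: "\<kappa> > 0" unfolding k using n1 n_def by simp
  define L where "L = 2 * r / \<kappa>"
  define M where "M = min \<epsilon> (\<kappa> * \<rho> / 2)"
  have L0: "L > 0" unfolding L_def using k0 pos by simp
  have LM: "L \<le> M" using good unfolding L_def M_def .
  define N where "N = nat \<lfloor>M / L\<rfloor>"
  have ML1: "M / L \<ge> 1" using LM L0 by simp
  have f1: "\<lfloor>M / L\<rfloor> \<ge> 1" using ML1 by (simp add: le_floor_iff)
  have RN: "real N = of_int \<lfloor>M / L\<rfloor>" unfolding N_def using f1 by simp
  have fc: "of_int \<lfloor>M / L\<rfloor> \<le> M / L" "M / L < of_int \<lfloor>M / L\<rfloor> + 1"
    using floor_correct[of "M / L"] by auto
  have f1': "(of_int \<lfloor>M / L\<rfloor> :: real) \<ge> 1" using f1 by simp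
  have N1: "real N \<ge> 1" using RN f1' by linarith
  have NML: "real N \<le> M / L" using RN fc by linarith
  have NML2: "2 * real N \<ge> M / L" using RN fc f1' by linarith
  have NL: "real N * L \<le> M" using NML L0 by (simp add: le_divide_eq)
  have Mle: "M \<le> \<epsilon>" unfolding M_def by simp
  have Ak: "\<epsilon> \<le> A * M"
  proof (cases "\<epsilon> \<le> \<kappa> * \<rho> / 2")
    case True
    hence "M = \<epsilon>" unfolding M_def by simp
    moreover have "A \<ge> 1" unfolding A by simp
    ultimately show ?thesis using pos by simp
  next
    case False
    hence Mv: "M = \<kappa> * \<rho> / 2" unfolding M_def by simp
    have "A \<ge> 4 * n * \<epsilon>0 / \<rho>" unfolding A n_def by simp
    hence "A * M \<ge> (4 * n * \<epsilon>0 / \<rho>) * (\<kappa> * \<rho> / 2)" unfolding Mv using k0 pos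
      by (intro mult_right_mono) auto
    also have "(4 * n * \<epsilon>0 / \<rho>) * (\<kappa> * \<rho> / 2) = \<epsilon>0" unfolding k n_def[symmetric] using pos n1 by (simp add: field_simps)
    finally show ?thesis using pos by simp
  qed
  have line': "y + (real k * L) *\<^sub>R e \<notin> S" if "y \<in> S" "1 \<le> k" "k < N" for y k
  proof
    assume yin: "y + (real k * L) *\<^sub>R e \<in> S"
    have "real k * L \<le> real N * L" using that L0 by (intro mult_right_mono) auto
    hence "real k * L \<le> \<kappa> * \<rho> / 2" using NL unfolding M_def by linarith
    moreover have "real k * L > 0" using that L0 by simp
    ultimately have "real k * L < L" using line[OF that(1) _ _ yin] unfolding L_def by blast
    moreover have "real k * L \<ge> L" using that L0 by simp
    ultimately show False by linarith
  qed
  have NmL: "real N * L \<le> \<epsilon>" using NL Mle by linarith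
  have "of_nat N * emeasure lborel S \<le> emeasure lborel (cball x (2*\<epsilon>))"
    by (rule pack[OF S L0 NmL e line'])
  also have "\<dots> \<le> ennreal ((2 * (2 * \<epsilon>)) ^ DIM('a))" using pos by (intro cball_measure) auto
  also have "2 * (2 * \<epsilon>) = 4 * \<epsilon>" by simp
  finally have ineq: "of_nat N * emeasure lborel S \<le> ennreal ((4 * \<epsilon>) ^ DIM('a))" .
  have fin: "emeasure lborel S < \<infinity>"
  proof -
    have "emeasure lborel S \<le> emeasure lborel (cball x \<epsilon>)" using S by (intro emeasure_mono) auto
    also have "\<dots> \<le> ennreal ((2 * \<epsilon>) ^ DIM('a))" using pos by (intro cball_measure) auto
    finally show ?thesis using ennreal_less_top[of "(2 * \<epsilon>) ^ DIM('a)"] by (simp add: le_less_trans)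
  qed
  hence Seq: "emeasure lborel S = ennreal (measure lborel S)" by (simp add: emeasure_eq_ennreal_measure)
  have mS: "measure lborel S \<ge> 0" by simp
  have "ennreal (real N * measure lborel S) \<le> ennreal ((4 * \<epsilon>) ^ DIM('a))"
    using ineq unfolding Seq by (simp add: ennreal_mult' ennreal_of_nat_eq_real_of_nat)
  hence r1: "real N * measure lborel S \<le> (4 * \<epsilon>) ^ DIM('a)"
    using pos by (subst (asm) ennreal_le_iff) auto
  define X where "X = (4 * \<epsilon>) ^ DIM('a)"
  have X0: "X \<ge> 0" unfolding X_def using pos by simp
  have M0: "M > 0" using L0 LM by linarith
  have "measure lborel S * real N \<le> X" using r1 unfolding X_def by (simp only: mult.commute)
  hence m1: "measure lborel S \<le> X / real N" using N1 by (intro pos_le_divide_eq[THEN iffD2]) auto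
  have "1 / real N \<le> 2 * L / M" using NML2 N1 M0 L0 by (simp add: field_simps)
  hence "X * (1 / real N) \<le> X * (2 * L / M)" using X0 by (intro mult_left_mono) auto
  hence m2: "measure lborel S \<le> X * (2 * L / M)" using m1 by simp
  obtain m where m: "DIM('a) = Suc m" using DIM_positive not0_implies_Suc by blast
  have ep: "\<epsilon> ^ DIM('a) = \<epsilon> ^ (DIM('a) - 1) * \<epsilon>"
    unfolding m by (simp add: mult.commute)
  define P where "P = \<epsilon> ^ (DIM('a) - 1)"
  have P0: "P \<ge> 0" unfolding P_def using pos by simp
  have "X = 4 ^ DIM('a) * P * \<epsilon>" unfolding X_def P_def by (simp only: power_mult_distrib ep mult.assoc)
  hence "X * (2 * L / M) = (4 ^ DIM('a) * P * (2 * L)) * (\<epsilon> / M)" by simp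
  also have "\<dots> \<le> (4 ^ DIM('a) * P * (2 * L)) * A"
  proof (rule mult_left_mono)
    show "\<epsilon> / M \<le> A" using Ak M0 by (simp add: divide_le_eq mult.commute)
    show "0 \<le> 4 ^ DIM('a) * P * (2 * L)" using P0 L0 by simp
  qed
  finally have m3: "X * (2 * L / M) \<le> (4 ^ DIM('a) * P * (2 * L)) * A" .
  have L8: "2 * L = 8 * real DIM('a) * r" unfolding L_def k by simp
  have "measure lborel S \<le> (4 ^ DIM('a) * P * (2 * L)) * A" using m2 m3 by linarith
  also have "\<dots> = 4 ^ DIM('a) * 8 * real DIM('a) * A * r * \<epsilon> ^ (DIM('a) - 1)"
    unfolding L8 P_def by (simp add: algebra_simps)
  finally have "measure lborel S \<le> 4 ^ DIM('a) * 8 * real DIM('a) * A * r * \<epsilon> ^ (DIM('a) - 1)" .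
  thus ?thesis unfolding Seq by (intro ennreal_leI)
qed


lemma Ak_lemma:
  assumes "0 < \<epsilon>" "\<epsilon> < \<epsilon>0" "0 < \<rho>" "n \<ge> (1::real)"
  shows "\<epsilon> \<le> max 1 (4 * n * \<epsilon>0 / \<rho>) * min \<epsilon> ((1 / (2 * n)) * \<rho> / 2)"
proof (cases "\<epsilon> \<le> (1 / (2 * n)) * \<rho> / 2")
  case True
  hence "min \<epsilon> ((1 / (2 * n)) * \<rho> / 2) = \<epsilon>" by simp
  moreover have "max 1 (4 * n * \<epsilon>0 / \<rho>) \<ge> 1" by simp
  ultimately show ?thesis using assms by simp
next
  case False
  hence Mv: "min \<epsilon> ((1 / (2 * n)) * \<rho> / 2) = (1 / (2 * n)) * \<rho> / 2" by simp
  have "max 1 (4 * n * \<epsilon>0 / \<rho>) \<ge> 4 * n * \<epsilon>0 / \<rho>" by simp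
  hence "max 1 (4 * n * \<epsilon>0 / \<rho>) * ((1 / (2 * n)) * \<rho> / 2) \<ge> (4 * n * \<epsilon>0 / \<rho>) * ((1 / (2 * n)) * \<rho> / 2)"
    using assms by (intro mult_right_mono) auto
  also have "(4 * n * \<epsilon>0 / \<rho>) * ((1 / (2 * n)) * \<rho> / 2) = \<epsilon>0" using assms by (simp add: field_simps)
  finally show ?thesis unfolding Mv using assms by simp
qed

lemma local_volume:
  fixes D :: "'a::euclidean_space set" and x :: 'a
  assumes sm: "smooth_domain D" and ext: "exterior_ball_radius D \<rho>" and \<rho>: "\<rho> > 0"
   and pos: "0 < \<epsilon>" "\<epsilon> < \<epsilon>0" and r: "0 < r"
  shows "emeasure lborel {y \<in> cball x \<epsilon>. 0 < infdist y (frontier D) \<and> infdist y (frontier D) < r}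
      \<le> ennreal (4 ^ DIM('a) * 32 * real DIM('a) ^ 2 * (max 1 (4 * real DIM('a) * \<epsilon>0 / \<rho>) + \<epsilon>0 / \<rho>) * r * \<epsilon> ^ (DIM('a) - 1))"
proof -
  define n where "n = real DIM('a)"
  have n1: "n \<ge> 1" unfolding n_def by (simp add: DIM_positive Suc_le_eq)
  define \<kappa> where "\<kappa> = 1 / (2 * n)"
  have k0: "\<kappa> > 0" "\<kappa> \<le> 1" unfolding \<kappa>_def using n1 by auto
  define A where "A = max 1 (4 * n * \<epsilon>0 / \<rho>)"
  have A1: "A \<ge> 1" unfolding A_def by simp
  define K where "K = 4 ^ DIM('a) * 32 * n^2 * (A + \<epsilon>0/\<rho>)"
  define d where "d y = infdist y (frontier D)" for y
  define T where "T = {y \<in> cball x \<epsilon>. 0 < d y \<and> d y < r}"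
  have dc: "continuous_on UNIV d" unfolding d_def by (intro continuous_intros)
  have oD: "open D" using sm unfolding smooth_domain_def is_domain_def by auto
  have o1: "open {y. 0 < d y}" using open_Collect_less[OF continuous_on_const dc] by simp
  have o2: "open {y. d y < r}" using open_Collect_less[OF dc continuous_on_const] by simp
  have Teq: "T = cball x \<epsilon> \<inter> ({y. 0 < d y} \<inter> {y. d y < r})" unfolding T_def by auto
  have Tm: "T \<in> sets lborel" unfolding Teq using o1 o2
    by (intro sets.Int borel_closed borel_open open_Int) (auto simp: sets_lborel)
  obtain m where m: "DIM('a) = Suc m" using DIM_positive not0_implies_Suc by blast
  have ep: "\<epsilon> ^ DIM('a) = \<epsilon> ^ (DIM('a) - 1) * \<epsilon>"
    unfolding m by (simp add: mult.commute)
  have main: "emeasure lborel T \<le> ennreal (K * r * \<epsilon> ^ (DIM('a) - 1))"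
  proof (cases "r \<le> \<rho>/2 \<and> 2*r/\<kappa> \<le> min \<epsilon> (\<kappa>*\<rho>/2)")
    case False
    have "emeasure lborel T \<le> emeasure lborel (cball x \<epsilon>)" unfolding T_def by (intro emeasure_mono) auto
    also have "\<dots> \<le> ennreal ((2 * \<epsilon>) ^ DIM('a))" using pos by (intro cball_measure) auto
    also have "(2 * \<epsilon>) ^ DIM('a) \<le> K * r * \<epsilon> ^ (DIM('a) - 1)"
    proof -
      have Ak: "\<epsilon> \<le> A * min \<epsilon> (\<kappa>*\<rho>/2)" unfolding A_def \<kappa>_def using Ak_lemma[OF pos \<rho> n1] by simp
      have epsr: "\<epsilon> \<le> (4 * n * A + 2 * \<epsilon>0 / \<rho>) * r"
      proof (cases "r \<le> \<rho>/2")
        case True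
        hence lt: "min \<epsilon> (\<kappa>*\<rho>/2) < 2*r/\<kappa>" using False by auto
        have "A * min \<epsilon> (\<kappa>*\<rho>/2) < A * (2*r/\<kappa>)" using lt A1 by (intro mult_strict_left_mono) auto
        hence "\<epsilon> < A * (2*r/\<kappa>)" using Ak by linarith
        also have "A * (2*r/\<kappa>) = 4 * n * A * r" unfolding \<kappa>_def using n1 by (simp add: field_simps)
        finally have "\<epsilon> < 4 * n * A * r" .
        moreover have "0 \<le> 2 * \<epsilon>0 / \<rho> * r" using pos \<rho> r by simp
        ultimately show ?thesis by (simp add: algebra_simps)
      next
        case False
        hence "\<epsilon>0 < (2 * \<epsilon>0 / \<rho>) * r" using pos \<rho> by (simp add: field_simps)
        moreover have "0 \<le> 4 * n * A * r" using n1 A1 r by simp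
        ultimately show ?thesis using pos by (simp add: algebra_simps)
      qed
      have c1: "2 ^ DIM('a) * (4 * n * A + 2 * \<epsilon>0 / \<rho>) \<le> K"
      proof -
        have "(2::real) ^ DIM('a) \<le> 4 ^ DIM('a)" by (intro power_mono) auto
        moreover have "4 * n * A + 2 * \<epsilon>0 / \<rho> \<le> 32 * n^2 * (A + \<epsilon>0/\<rho>)"
        proof -
          have "4 * n * A \<le> 32 * n^2 * A" using n1 A1 by (simp add: power2_eq_square)
          moreover have "2 * \<epsilon>0 / \<rho> \<le> 32 * n^2 * (\<epsilon>0/\<rho>)"
          proof -
            have "1 \<le> n^2" using n1 by (simp add: one_le_power)
            hence "2 \<le> 32 * n^2" by linarith
            hence "2 * (\<epsilon>0/\<rho>) \<le> 32 * n^2 * (\<epsilon>0/\<rho>)" using pos \<rho> by (intro mult_right_mono) auto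
            thus ?thesis by simp
          qed
          ultimately show ?thesis by (simp add: algebra_simps)
        qed
        moreover have "0 \<le> 4 * n * A + 2 * \<epsilon>0 / \<rho>" using n1 A1 pos \<rho> by simp
        ultimately have "2 ^ DIM('a) * (4 * n * A + 2 * \<epsilon>0 / \<rho>) \<le> 4 ^ DIM('a) * (32 * n^2 * (A + \<epsilon>0/\<rho>))"
          by (intro mult_mono) auto
        thus ?thesis unfolding K_def by (simp add: mult.assoc)
      qed
      have "(2 * \<epsilon>) ^ DIM('a) = 2 ^ DIM('a) * \<epsilon> ^ (DIM('a) - 1) * \<epsilon>" by (simp add: power_mult_distrib ep)
      also have "\<dots> \<le> 2 ^ DIM('a) * \<epsilon> ^ (DIM('a) - 1) * ((4 * n * A + 2 * \<epsilon>0 / \<rho>) * r)"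
        using epsr pos by (intro mult_left_mono) auto
      also have "\<dots> = (2 ^ DIM('a) * (4 * n * A + 2 * \<epsilon>0 / \<rho>)) * r * \<epsilon> ^ (DIM('a) - 1)" by simp
      also have "\<dots> \<le> K * r * \<epsilon> ^ (DIM('a) - 1)"
        using c1 r pos by (intro mult_right_mono) auto
      finally show ?thesis .
    qed
    finally show ?thesis by (simp add: ennreal_leI)
  next
    case True
    hence r2: "r \<le> \<rho>/2" and good: "2*r/\<kappa> \<le> min \<epsilon> (\<kappa>*\<rho>/2)" by auto
    define Dirs where "Dirs = (\<lambda>(b,\<sigma>). \<sigma> *\<^sub>R b) ` ((Basis::'a set) \<times> {1::real,-1})"
    have Dfin: "finite Dirs" unfolding Dirs_def by simp
    have Dcard: "real (card Dirs) \<le> 2 * n"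
    proof -
      have "card Dirs \<le> card ((Basis::'a set) \<times> {1::real,-1})" unfolding Dirs_def by (rule card_image_le) simp
      also have "\<dots> = DIM('a) * 2" by (simp add: card_cartesian_product)
      finally show ?thesis unfolding n_def by simp
    qed
    have Dn: "norm e = 1" if "e \<in> Dirs" for e using that unfolding Dirs_def by auto
    define E where "E = {c. ball c \<rho> \<inter> D = {}}"
    define Sin where "Sin e = {y \<in> cball x \<epsilon>. y \<in> D \<and> d y < r \<and> (\<exists>c\<in>E. dist y c < \<rho> + r \<and> \<kappa> * norm (y - c) < (y - c) \<bullet> e)}" for e
    define Sout where "Sout e = {y \<in> cball x \<epsilon>. 0 < d y \<and> d y < r \<and> (\<exists>c\<in>E. dist y c < \<rho> \<and> \<kappa> * norm (c - y) < (c - y) \<bullet> e)}" for e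
    have oc1: "open {y. dist y c < R \<and> \<kappa> * norm (y - c) < (y - c) \<bullet> e}" for c R e
      by (intro open_Collect_conj open_Collect_less continuous_intros)
    have oc2: "open {y. dist y c < R \<and> \<kappa> * norm (c - y) < (c - y) \<bullet> e}" for c R e
      by (intro open_Collect_conj open_Collect_less continuous_intros)
    have U1: "open {y. \<exists>c\<in>E. dist y c < R \<and> \<kappa> * norm (y - c) < (y - c) \<bullet> e}" for R e
    proof -
      have "{y. \<exists>c\<in>E. dist y c < R \<and> \<kappa> * norm (y - c) < (y - c) \<bullet> e} = (\<Union>c\<in>E. {y. dist y c < R \<and> \<kappa> * norm (y - c) < (y - c) \<bullet> e})" by auto
      thus ?thesis by (simp only:) (intro open_UN ballI oc1)
    qed
    have U2: "open {y. \<exists>c\<in>E. dist y c < R \<and> \<kappa> * norm (c - y) < (c - y) \<bullet> e}" for R e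
    proof -
      have "{y. \<exists>c\<in>E. dist y c < R \<and> \<kappa> * norm (c - y) < (c - y) \<bullet> e} = (\<Union>c\<in>E. {y. dist y c < R \<and> \<kappa> * norm (c - y) < (c - y) \<bullet> e})" by auto
      thus ?thesis by (simp only:) (intro open_UN ballI oc2)
    qed
    have Sinm: "Sin e \<in> sets lborel" for e
    proof -
      have "Sin e = cball x \<epsilon> \<inter> (D \<inter> {y. d y < r} \<inter> {y. \<exists>c\<in>E. dist y c < \<rho> + r \<and> \<kappa> * norm (y - c) < (y - c) \<bullet> e})"
        unfolding Sin_def by auto
      thus ?thesis using oD o2 U1 by (auto intro!: sets.Int borel_closed borel_open open_Int simp: sets_lborel)
    qed
    have Soutm: "Sout e \<in> sets lborel" for e
    proof -
      have "Sout e = cball x \<epsilon> \<inter> ({y. 0 < d y} \<inter> {y. d y < r} \<inter> {y. \<exists>c\<in>E. dist y c < \<rho> \<and> \<kappa> * norm (c - y) < (c - y) \<bullet> e})"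
        unfolding Sout_def by auto
      thus ?thesis using o1 o2 U2 by (auto intro!: sets.Int borel_closed borel_open open_Int simp: sets_lborel)
    qed
    have lineIn: "\<tau> < 2 * r / \<kappa>" if e: "e \<in> Dirs" and y: "y \<in> Sin e" and t: "0 < \<tau>" "\<tau> \<le> \<kappa> * \<rho> / 2"
      and y2: "y + \<tau> *\<^sub>R e \<in> Sin e" for e y \<tau>
    proof -
      obtain c where c: "c \<in> E" "dist (y + \<tau> *\<^sub>R e) c < \<rho> + r" "\<kappa> * norm ((y + \<tau> *\<^sub>R e) - c) < ((y + \<tau> *\<^sub>R e) - c) \<bullet> e"
        using y2 unfolding Sin_def by auto
      define u where "u = (y + \<tau> *\<^sub>R e) - c"
      have "y + \<tau> *\<^sub>R e \<in> D" using y2 unfolding Sin_def by auto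
      hence "y + \<tau> *\<^sub>R e \<notin> ball c \<rho>" using c(1) unfolding E_def by blast
      hence nu: "norm u \<ge> \<rho>" unfolding u_def by (simp add: dist_norm norm_minus_commute not_less)
      have "\<tau> \<le> \<kappa> * norm u"
      proof -
        have "\<kappa> * \<rho> / 2 \<le> \<kappa> * \<rho>" using k0 \<rho> by simp
        also have "\<dots> \<le> \<kappa> * norm u" using nu k0 by (intro mult_left_mono) auto
        finally show ?thesis using t by linarith
      qed
      from quad[OF Dn[OF e] t(1) this k0 c(3)[folded u_def]]
      have q: "norm (u - \<tau> *\<^sub>R e) < norm u - \<tau> * \<kappa> / 2" by blast
      have "u - \<tau> *\<^sub>R e = y - c" unfolding u_def by simp
      hence q': "norm (y - c) < norm u - \<tau> * \<kappa> / 2" using q by simp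
      have "y \<in> D" using y unfolding Sin_def by auto
      hence "y \<notin> ball c \<rho>" using c(1) unfolding E_def by blast
      hence "norm (y - c) \<ge> \<rho>" by (simp add: dist_norm norm_minus_commute not_less)
      moreover have "norm u < \<rho> + r" using c(2) unfolding u_def by (simp add: dist_norm)
      ultimately have "\<tau> * \<kappa> < 2 * r" using q' by linarith
      thus ?thesis using k0 by (simp add: field_simps)
    qed
    have lineOut: "\<tau> < 2 * r / \<kappa>" if e: "e \<in> Dirs" and y: "y \<in> Sout e" and t: "0 < \<tau>" "\<tau> \<le> \<kappa> * \<rho> / 2"
      and y2: "y + \<tau> *\<^sub>R e \<in> Sout e" for e y \<tau>
    proof -
      obtain c where c: "c \<in> E" "dist y c < \<rho>" "\<kappa> * norm (c - y) < (c - y) \<bullet> e"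
        using y unfolding Sout_def by auto
      have dy: "0 < d y" "d y < r" using y unfolding Sout_def by auto
      have fne: "frontier D \<noteq> {}" using dy unfolding d_def by (auto simp: infdist_def)
      define u where "u = c - y"
      have "d y \<ge> \<rho> - dist y c" unfolding d_def using infdist_lower[OF _ fne] c(1) unfolding E_def by blast
      hence nu: "norm u > \<rho> / 2" unfolding u_def using dy r2 by (simp add: dist_norm norm_minus_commute)
      have "\<tau> \<le> \<kappa> * norm u"
      proof -
        have "\<kappa> * \<rho> / 2 \<le> \<kappa> * norm u" using nu k0 by (simp add: less_imp_le)
        thus ?thesis using t by linarith
      qed
      from quad[OF Dn[OF e] t(1) this k0 c(3)[folded u_def]]
      have q: "norm (u - \<tau> *\<^sub>R e) < norm u - \<tau> * \<kappa> / 2" by blast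
      have "u - \<tau> *\<^sub>R e = c - (y + \<tau> *\<^sub>R e)" unfolding u_def by simp
      hence "norm (c - (y + \<tau> *\<^sub>R e)) < norm u - \<tau> * \<kappa> / 2" using q by (simp only:)
      hence dd: "dist (y + \<tau> *\<^sub>R e) c < norm u - \<tau> * \<kappa> / 2" by (simp add: dist_norm norm_minus_commute)
      have "d (y + \<tau> *\<^sub>R e) \<ge> \<rho> - dist (y + \<tau> *\<^sub>R e) c"
        unfolding d_def using infdist_lower[OF _ fne] c(1) unfolding E_def by blast
      moreover have "norm u < \<rho>" using c(2) unfolding u_def by (simp add: dist_norm norm_minus_commute)
      moreover have "d (y + \<tau> *\<^sub>R e) < r" using y2 unfolding Sout_def by auto
      ultimately have "\<tau> * \<kappa> < 2 * r" using dd by linarith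
      thus ?thesis using k0 by (simp add: field_simps)
    qed
    have cover: "T \<subseteq> (\<Union>e\<in>Dirs. Sin e \<union> Sout e)"
    proof
      fix y assume yT: "y \<in> T"
      hence yc: "y \<in> cball x \<epsilon>" and dy: "0 < d y" "d y < r" unfolding T_def by auto
      have fne: "frontier D \<noteq> {}" using dy unfolding d_def by (auto simp: infdist_def)
      obtain p where p: "p \<in> frontier D" "d y = dist y p"
        using infdist_attains_inf[OF frontier_closed fne, of y] unfolding d_def by blast
      obtain c where c1: "ball c \<rho> \<subseteq> - closure D" and c2: "cball c \<rho> \<inter> closure D = {p}"
        using ext p(1) unfolding exterior_ball_radius_def by blast
      have cD: "ball c \<rho> \<inter> D = {}" using c1 closure_subset by blast
      have cE: "c \<in> E" unfolding E_def using cD by simp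
      have pcl: "p \<in> closure D" using p(1) by (simp add: frontier_def)
      have dcp: "dist c p = \<rho>"
      proof -
        have "p \<in> cball c \<rho>" using c2 by blast
        moreover have "p \<notin> ball c \<rho>" using c1 pcl by blast
        ultimately show ?thesis by simp
      qed
      have dirs: "\<exists>e\<in>Dirs. \<kappa> * norm v < v \<bullet> e" if vne: "v \<noteq> 0" for v
      proof -
        obtain b \<sigma> where b: "b \<in> Basis" "\<sigma> \<in> {1::real,-1}" "(\<sigma> *\<^sub>R b) \<bullet> v > (1 / (2 * real DIM('a))) * norm v"
          using direction_exists[OF vne] by blast
        have "\<sigma> *\<^sub>R b \<in> Dirs" unfolding Dirs_def using b by force
        moreover have "\<kappa> * norm v < v \<bullet> (\<sigma> *\<^sub>R b)" using b(3) unfolding \<kappa>_def n_def by (simp add: inner_commute)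
        ultimately show ?thesis by blast
      qed
      show "y \<in> (\<Union>e\<in>Dirs. Sin e \<union> Sout e)"
      proof (cases "y \<in> D")
        case True
        have "dist y c \<le> dist y p + dist p c" by (rule dist_triangle)
        hence dyc: "dist y c < \<rho> + r" using dy p(2) dcp by (simp add: dist_commute)
        have "c \<in> ball c \<rho>" using \<rho> by simp
        hence "c \<notin> D" using cD by blast
        hence "y - c \<noteq> 0" using True by auto
        then obtain e where e: "e \<in> Dirs" "\<kappa> * norm (y - c) < (y - c) \<bullet> e" using dirs by blast
        hence "y \<in> Sin e" unfolding Sin_def using yc True dy dyc cE by blast
        thus ?thesis using e by blast
      next
        case False
        have ycl: "y \<notin> closure D"
        proof
          assume "y \<in> closure D"
          hence "y \<in> frontier D" using False oD by (simp add: frontier_def interior_open)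
          hence "d y = 0" unfolding d_def by simp
          thus False using dy by simp
        qed
        have bD: "ball y (d y) \<inter> D = {}"
        proof (rule ccontr)
          assume ne: "ball y (d y) \<inter> D \<noteq> {}"
          moreover have "y \<in> ball y (d y)" using dy by simp
          hence "ball y (d y) - D \<noteq> {}" using False by blast
          ultimately have "ball y (d y) \<inter> frontier D \<noteq> {}"
            using connected_Int_frontier[OF connected_ball] by blast
          then obtain f where f: "f \<in> ball y (d y)" "f \<in> frontier D" by blast
          have "d y \<le> dist y f" unfolding d_def using infdist_le[OF f(2)] .
          thus False using f(1) by simp
        qed
        have np: "y - p = (d y / \<rho>) *\<^sub>R (c - p)"
          using normal_parallel[OF sm p(1) dcp \<rho> cD p(2)[symmetric] dy(1) bD] .
        have "c - y = (1 - d y / \<rho>) *\<^sub>R (c - p)"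
        proof -
          have "c - y = (c - p) - (y - p)" by simp
          also have "\<dots> = (1 - d y / \<rho>) *\<^sub>R (c - p)" unfolding np by (simp add: algebra_simps)
          finally show ?thesis .
        qed
        hence "norm (c - y) = \<bar>1 - d y / \<rho>\<bar> * \<rho>" using dcp by (simp add: dist_norm)
        moreover have "d y / \<rho> < 1" using dy r2 \<rho> by simp
        ultimately have ncy: "norm (c - y) = \<rho> - d y" using \<rho> by (simp add: algebra_simps)
        hence dyc: "dist y c < \<rho>" using dy by (simp add: dist_norm norm_minus_commute)
        have "c - y \<noteq> 0" using ncy dy r2 by auto
        then obtain e where e: "e \<in> Dirs" "\<kappa> * norm (c - y) < (c - y) \<bullet> e" using dirs by blast
        hence "y \<in> Sout e" unfolding Sout_def using yc dy dyc cE by blast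
        thus ?thesis using e by blast
      qed
    qed
    define B where "B = 4 ^ DIM('a) * 8 * real DIM('a) * A * r * \<epsilon> ^ (DIM('a) - 1)"
    have B0: "B \<ge> 0" unfolding B_def using A1 r pos by simp
    have bIn: "emeasure lborel (Sin e) \<le> ennreal B" if e: "e \<in> Dirs" for e
      unfolding B_def
      apply (rule set_bound[OF Sinm _ Dn[OF e] \<kappa>_def[unfolded n_def] A_def[unfolded n_def] pos r \<rho> good])
       apply (force simp: Sin_def)
      apply (rule lineIn[OF e]; assumption)
      done
    have bOut: "emeasure lborel (Sout e) \<le> ennreal B" if e: "e \<in> Dirs" for e
      unfolding B_def
      apply (rule set_bound[OF Soutm _ Dn[OF e] \<kappa>_def[unfolded n_def] A_def[unfolded n_def] pos r \<rho> good])
       apply (force simp: Sout_def)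
      apply (rule lineOut[OF e]; assumption)
      done
    have "emeasure lborel T \<le> emeasure lborel (\<Union>e\<in>Dirs. Sin e \<union> Sout e)"
      using cover Sinm Soutm Dfin by (intro emeasure_mono) auto
    also have "\<dots> \<le> (\<Sum>e\<in>Dirs. emeasure lborel (Sin e \<union> Sout e))"
      using Sinm Soutm Dfin by (intro emeasure_subadditive_finite) auto
    also have "\<dots> \<le> (\<Sum>e\<in>Dirs. ennreal (2 * B))"
    proof (rule sum_mono)
      fix e assume e: "e \<in> Dirs"
      have "emeasure lborel (Sin e \<union> Sout e) \<le> emeasure lborel (Sin e) + emeasure lborel (Sout e)"
        using Sinm Soutm by (intro emeasure_subadditive) auto
      also have "\<dots> \<le> ennreal B + ennreal B" using bIn[OF e] bOut[OF e] by (intro add_mono)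
      also have "\<dots> = ennreal (2 * B)" using B0 by (simp add: ennreal_plus[symmetric])
      finally show "emeasure lborel (Sin e \<union> Sout e) \<le> ennreal (2 * B)" .
    qed
    also have "\<dots> = ennreal (real (card Dirs) * (2 * B))"
      using B0 by (simp add: ennreal_mult ennreal_of_nat_eq_real_of_nat)
    also have "\<dots> \<le> ennreal (K * r * \<epsilon> ^ (DIM('a) - 1))"
    proof (rule ennreal_leI)
      have "real (card Dirs) * (2 * B) \<le> (2 * n) * (2 * B)" using Dcard B0 by (intro mult_right_mono) auto
      also have "\<dots> = 4 ^ DIM('a) * 32 * n^2 * A * r * \<epsilon> ^ (DIM('a) - 1)"
        unfolding B_def n_def by (simp add: power2_eq_square)
      also have "\<dots> \<le> K * r * \<epsilon> ^ (DIM('a) - 1)"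
      proof -
        have "4 ^ DIM('a) * 32 * n^2 * A \<le> K" unfolding K_def using pos \<rho> by (simp add: add_increasing2 mult_left_mono)
        thus ?thesis using r pos by (intro mult_right_mono) auto
      qed
      finally show "real (card Dirs) * (2 * B) \<le> K * r * \<epsilon> ^ (DIM('a) - 1)" .
    qed
    finally show ?thesis .
  qed
  show ?thesis using main unfolding T_def d_def K_def A_def n_def .
qed


lemma ident:
  fixes \<epsilon> s :: real and k :: nat
  assumes "\<epsilon> > 0"
  shows "(\<epsilon> / 2^(k+1)) powr (-s) / 2^k = \<epsilon> powr (-s) * 2 powr s * (2 powr (s - 1))^k"
proof -
  have a: "(2::real)^(k+1) = 2 powr (real k + 1)" using powr_realpow[of 2 "k+1"] by (simp add: add.commute)
  have b: "(2::real)^k = 2 powr (real k)" by (simp add: powr_realpow)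
  have c: "(2 powr (s - 1))^k = 2 powr ((s - 1) * real k)"
    by (simp add: powr_realpow[symmetric] powr_powr)
  have "(\<epsilon> / 2^(k+1)) powr (-s) = \<epsilon> powr (-s) / (2 powr (real k + 1)) powr (-s)"
    using assms unfolding a by (simp add: powr_divide)
  also have "\<dots> = \<epsilon> powr (-s) * 2 powr (s * (real k + 1))"
    by (simp add: powr_powr powr_minus divide_inverse mult.commute)
  finally have "(\<epsilon> / 2^(k+1)) powr (-s) / 2^k = \<epsilon> powr (-s) * 2 powr (s * (real k + 1)) / 2 powr (real k)"
    unfolding b by simp
  also have "\<dots> = \<epsilon> powr (-s) * (2 powr (s * (real k + 1)) / 2 powr (real k))" by simp
  also have "2 powr (s * (real k + 1)) / 2 powr (real k) = 2 powr s * 2 powr ((s - 1) * real k)"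
    by (simp add: powr_diff[symmetric] powr_add[symmetric] algebra_simps)
  finally show ?thesis unfolding c by simp
qed

lemma pick_k:
  fixes d \<epsilon> :: real
  assumes "0 < d" "d < \<epsilon>"
  shows "\<exists>k::nat. \<epsilon> / 2^(k+1) \<le> d \<and> d < \<epsilon> / 2^k"
proof -
  have ex: "\<exists>m::nat. \<epsilon> / 2^(m+1) \<le> d"
  proof -
    obtain m where m: "\<epsilon> / d < 2^m" using real_arch_pow[of 2 "\<epsilon> / d"] by auto
    have "\<epsilon> < 2^m * d" using m assms by (simp add: divide_less_eq)
    hence "\<epsilon> / 2^(m+1) \<le> d" using assms by (simp add: divide_le_eq algebra_simps)
    thus ?thesis by blast
  qed
  define k where "k = (LEAST m::nat. \<epsilon> / 2^(m+1) \<le> d)"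
  have k1: "\<epsilon> / 2^(k+1) \<le> d" unfolding k_def using LeastI_ex[OF ex] .
  have k2: "d < \<epsilon> / 2^k"
  proof (cases k)
    case 0 thus ?thesis using assms by simp
  next
    case (Suc j)
    have "\<not> \<epsilon> / 2^(j+1) \<le> d"
    proof
      assume "\<epsilon> / 2^(j+1) \<le> d"
      hence "k \<le> j" unfolding k_def by (rule Least_le)
      thus False using Suc by simp
    qed
    thus ?thesis using Suc by simp
  qed
  show ?thesis using k1 k2 by blast
qed

lemma meas_ci: "S \<in> sets M \<Longrightarrow> (\<lambda>y. c * indicator S y :: ennreal) \<in> borel_measurable M"
  by (intro borel_measurable_times_ennreal borel_measurable_indicator) auto

lemma integral_bound:
  fixes d :: "'a::euclidean_space \<Rightarrow> real"
  assumes dc: "continuous_on UNIV d" and d0: "\<And>y. d y \<ge> 0"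
   and s: "0 < s" "s < 1" and eps: "\<epsilon> > 0" and K: "K \<ge> 0"
   and vol: "\<And>r. r > 0 \<Longrightarrow> emeasure lborel {y \<in> cball x \<epsilon>. 0 < d y \<and> d y < r} \<le> ennreal (K * r * \<epsilon> ^ (DIM('a) - 1))"
  shows "(\<integral>\<^sup>+ y. ennreal (d y powr (-s)) * indicator (cball x \<epsilon>) y \<partial>lborel)
     \<le> ennreal ((2 ^ DIM('a) + K * 2 powr s / (1 - 2 powr (s - 1))) * \<epsilon> ^ DIM('a) * \<epsilon> powr (-s))"
proof -
  define n where "n = DIM('a)"
  define W where "W k = (\<epsilon> / 2^(k+1)) powr (-s)" for k :: nat
  define A where "A k = {y \<in> cball x \<epsilon>. 0 < d y \<and> d y < \<epsilon> / 2^k}" for k :: nat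
  define q where "q = (2::real) powr (s - 1)"
  have "(2::real) powr (s - 1) < 2 powr 0" using s by (intro powr_less_mono) auto
  hence q0: "0 < q" "q < 1" unfolding q_def by auto
  have W0: "W k \<ge> 0" for k unfolding W_def by simp
  have Am: "A k \<in> sets lborel" for k
  proof -
    have o1: "open {y. 0 < d y}" using open_Collect_less[OF continuous_on_const dc] by simp
    have o2: "open {y. d y < \<epsilon> / 2^k}" using open_Collect_less[OF dc continuous_on_const] by simp
    have "A k = cball x \<epsilon> \<inter> ({y. 0 < d y} \<inter> {y. d y < \<epsilon> / 2^k})" unfolding A_def by auto
    thus ?thesis using o1 o2 by (auto intro!: sets.Int borel_closed borel_open open_Int simp: sets_lborel)
  qed
  have cbm: "cball x \<epsilon> \<in> sets lborel" by (simp add: sets_lborel borel_closed)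
  have pw: "ennreal (d y powr (-s)) * indicator (cball x \<epsilon>) y
      \<le> ennreal (\<epsilon> powr (-s)) * indicator (cball x \<epsilon>) y + (\<Sum>k. ennreal (W k) * indicator (A k) y)" for y
  proof (cases "y \<in> cball x \<epsilon>")
    case False thus ?thesis by simp
  next
    case True
    consider "d y = 0" | "d y \<ge> \<epsilon>" | "0 < d y \<and> d y < \<epsilon>" using d0[of y] by linarith
    thus ?thesis
    proof cases
      case 1 thus ?thesis by simp
    next
      case 2
      have "d y powr (-s) \<le> \<epsilon> powr (-s)" using 2 eps s by (intro powr_mono2') auto
      hence "ennreal (d y powr (-s)) * indicator (cball x \<epsilon>) y \<le> ennreal (\<epsilon> powr (-s)) * indicator (cball x \<epsilon>) y"
        using True by (simp add: ennreal_leI)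
      thus ?thesis by (simp add: add_increasing2)
    next
      case 3
      then obtain k where k: "\<epsilon> / 2^(k+1) \<le> d y" "d y < \<epsilon> / 2^k" using pick_k by blast
      have "d y powr (-s) \<le> W k" unfolding W_def using k eps s by (intro powr_mono2') auto
      hence "ennreal (d y powr (-s)) \<le> ennreal (W k) * indicator (A k) y"
        using k True 3 unfolding A_def by (simp add: ennreal_leI)
      also have "\<dots> \<le> (\<Sum>k. ennreal (W k) * indicator (A k) y)"
      proof -
        define f where "f j = ennreal (W j) * indicator (A j) y" for j
        have "sum f {k} \<le> suminf f" by (rule sum_le_suminf[OF summableI]) auto
        hence "f k \<le> suminf f" by simp
        thus ?thesis unfolding f_def .
      qed
      finally show ?thesis using True by (simp add: add_increasing)
    qed
  qed
  have "(\<integral>\<^sup>+ y. ennreal (d y powr (-s)) * indicator (cball x \<epsilon>) y \<partial>lborel)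
      \<le> (\<integral>\<^sup>+ y. ennreal (\<epsilon> powr (-s)) * indicator (cball x \<epsilon>) y + (\<Sum>k. ennreal (W k) * indicator (A k) y) \<partial>lborel)"
    by (intro nn_integral_mono pw)
  also have "\<dots> = ennreal (\<epsilon> powr (-s)) * emeasure lborel (cball x \<epsilon>) + (\<Sum>k. ennreal (W k) * emeasure lborel (A k))"
  proof -
    have m2: "(\<lambda>y. (\<Sum>k. ennreal (W k) * indicator (A k) y)) \<in> borel_measurable lborel"
      using Am by (intro borel_measurable_suminf_order meas_ci)
    have "(\<integral>\<^sup>+ y. ennreal (\<epsilon> powr (-s)) * indicator (cball x \<epsilon>) y + (\<Sum>k. ennreal (W k) * indicator (A k) y) \<partial>lborel)
      = (\<integral>\<^sup>+ y. ennreal (\<epsilon> powr (-s)) * indicator (cball x \<epsilon>) y \<partial>lborel) + (\<integral>\<^sup>+ y. (\<Sum>k. ennreal (W k) * indicator (A k) y) \<partial>lborel)"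
      by (rule nn_integral_add[OF meas_ci[OF cbm] m2])
    also have "(\<integral>\<^sup>+ y. ennreal (\<epsilon> powr (-s)) * indicator (cball x \<epsilon>) y \<partial>lborel) = ennreal (\<epsilon> powr (-s)) * emeasure lborel (cball x \<epsilon>)"
      by (rule nn_integral_cmult_indicator[OF cbm])
    also have "(\<integral>\<^sup>+ y. (\<Sum>k. ennreal (W k) * indicator (A k) y) \<partial>lborel) = (\<Sum>k. (\<integral>\<^sup>+ y. ennreal (W k) * indicator (A k) y \<partial>lborel))"
      by (rule nn_integral_suminf[OF meas_ci[OF Am]])
    also have "(\<lambda>k. (\<integral>\<^sup>+ y. ennreal (W k) * indicator (A k) y \<partial>lborel)) = (\<lambda>k. ennreal (W k) * emeasure lborel (A k))"
      by (rule ext, rule nn_integral_cmult_indicator[OF Am])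
    finally show ?thesis .
  qed
  also have "\<dots> \<le> ennreal (\<epsilon> powr (-s)) * ennreal ((2 * \<epsilon>) ^ DIM('a)) + (\<Sum>k. ennreal (W k * (K * (\<epsilon> / 2^k) * \<epsilon> ^ (DIM('a) - 1))))"
  proof (intro add_mono mult_left_mono suminf_le)
    show "emeasure lborel (cball x \<epsilon>) \<le> ennreal ((2 * \<epsilon>) ^ DIM('a))" using eps by (intro cball_measure) auto
    fix k
    have "emeasure lborel (A k) \<le> ennreal (K * (\<epsilon> / 2^k) * \<epsilon> ^ (DIM('a) - 1))"
      unfolding A_def using eps by (intro vol) simp
    hence "ennreal (W k) * emeasure lborel (A k) \<le> ennreal (W k) * ennreal (K * (\<epsilon> / 2^k) * \<epsilon> ^ (DIM('a) - 1))"
      by (intro mult_left_mono) auto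
    thus "ennreal (W k) * emeasure lborel (A k) \<le> ennreal (W k * (K * (\<epsilon> / 2^k) * \<epsilon> ^ (DIM('a) - 1)))"
      by (subst ennreal_mult'[OF W0])
  qed auto
  also have "(\<lambda>k. W k * (K * (\<epsilon> / 2^k) * \<epsilon> ^ (DIM('a) - 1))) = (\<lambda>k. (K * \<epsilon> ^ DIM('a) * \<epsilon> powr (-s) * 2 powr s) * q ^ k)"
  proof
    fix k
    obtain m where m: "DIM('a) = Suc m" using DIM_positive not0_implies_Suc by blast
    have "W k * (K * (\<epsilon> / 2^k) * \<epsilon> ^ (DIM('a) - 1)) = K * \<epsilon> ^ DIM('a) * (W k / 2^k)"
      unfolding m by (simp add: field_simps)
    also have "W k / 2^k = \<epsilon> powr (-s) * 2 powr s * q ^ k" unfolding W_def q_def using ident[OF eps] .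
    finally show "W k * (K * (\<epsilon> / 2^k) * \<epsilon> ^ (DIM('a) - 1)) = (K * \<epsilon> ^ DIM('a) * \<epsilon> powr (-s) * 2 powr s) * q ^ k"
      by simp
  qed
  also have "(\<Sum>k. ennreal ((K * \<epsilon> ^ DIM('a) * \<epsilon> powr (-s) * 2 powr s) * q ^ k))
      = ennreal (\<Sum>k. (K * \<epsilon> ^ DIM('a) * \<epsilon> powr (-s) * 2 powr s) * q ^ k)"
    using q0 K eps by (intro suminf_ennreal2) (auto intro!: summable_mult)
  also have "(\<Sum>k. (K * \<epsilon> ^ DIM('a) * \<epsilon> powr (-s) * 2 powr s) * q ^ k) = (K * \<epsilon> ^ DIM('a) * \<epsilon> powr (-s) * 2 powr s) * (1 / (1 - q))"
    using q0 by (simp add: suminf_mult suminf_geometric)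
  also have "ennreal (\<epsilon> powr (-s)) * ennreal ((2 * \<epsilon>) ^ DIM('a)) + ennreal ((K * \<epsilon> ^ DIM('a) * \<epsilon> powr (-s) * 2 powr s) * (1 / (1 - q)))
      = ennreal ((2 ^ DIM('a) + K * 2 powr s / (1 - q)) * \<epsilon> ^ DIM('a) * \<epsilon> powr (-s))"
  proof -
    have nn1: "0 \<le> \<epsilon> powr (-s) * (2 * \<epsilon>) ^ DIM('a)" using eps by simp
    have nn2: "0 \<le> (K * \<epsilon> ^ DIM('a) * \<epsilon> powr (-s) * 2 powr s) * (1 / (1 - q))" using K eps q0 by simp
    have "ennreal (\<epsilon> powr (-s)) * ennreal ((2 * \<epsilon>) ^ DIM('a)) = ennreal (\<epsilon> powr (-s) * (2 * \<epsilon>) ^ DIM('a))"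
      using eps by (simp add: ennreal_mult)
    moreover have "\<epsilon> powr (-s) * (2 * \<epsilon>) ^ DIM('a) + (K * \<epsilon> ^ DIM('a) * \<epsilon> powr (-s) * 2 powr s) * (1 / (1 - q))
        = (2 ^ DIM('a) + K * 2 powr s / (1 - q)) * \<epsilon> ^ DIM('a) * \<epsilon> powr (-s)"
      using q0 by (simp add: power_mult_distrib field_simps)
    ultimately show ?thesis using nn1 nn2 by (simp add: ennreal_plus[symmetric])
  qed
  finally show ?thesis unfolding q_def .
qed


theorem lemma2p14:
  fixes \<Omega> :: "'a::euclidean_space set"
    and D :: "real \<Rightarrow> 'a set"
    and \<eta> :: "'a \<Rightarrow> real"
    and s \<epsilon>0 lam :: real
  assumes s: "0 < s" "s < 1"
    and \<Omega>: "bounded \<Omega>" "lipschitz_domain \<Omega>" "uniform_exterior_ball \<Omega>"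
    and \<epsilon>0: "0 < \<epsilon>0"
    and lam: "lam > 1"
    and Dsmooth: "\<And>\<epsilon>. 0 < \<epsilon> \<Longrightarrow> \<epsilon> < \<epsilon>0 \<Longrightarrow> smooth_domain (D \<epsilon>)"
    and Dmono: "\<And>\<epsilon> \<epsilon>'. 0 < \<epsilon>' \<Longrightarrow> \<epsilon>' < \<epsilon> \<Longrightarrow> \<epsilon> < \<epsilon>0 \<Longrightarrow> D \<epsilon> \<subseteq> D \<epsilon>'"
    and Dcc: "\<And>\<epsilon>. 0 < \<epsilon> \<Longrightarrow> \<epsilon> < \<epsilon>0 \<Longrightarrow> compactly_contained (D \<epsilon>) \<Omega>"
    and Dunion: "(\<Union>\<epsilon>\<in>{0<..<\<epsilon>0}. D \<epsilon>) = \<Omega>"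
    and Dball: "\<exists>\<rho>>0. \<forall>\<epsilon>. 0 < \<epsilon> \<and> \<epsilon> < \<epsilon>0 \<longrightarrow> exterior_ball_radius (D \<epsilon>) \<rho>"
    and Ddist1: "\<And>\<epsilon>. 0 < \<epsilon> \<Longrightarrow> \<epsilon> < \<epsilon>0 \<Longrightarrow> \<epsilon> \<le> setdist (frontier (D \<epsilon>)) (frontier \<Omega>)"
    and Ddist2: "\<And>\<epsilon>. 0 < \<epsilon> \<Longrightarrow> \<epsilon> < \<epsilon>0 \<Longrightarrow>
                   (\<forall>x\<in>frontier (D \<epsilon>). infdist x (frontier \<Omega>) \<le> lam * \<epsilon>)"
    and \<eta>: "smooth_fun \<eta>" "\<And>x. \<eta> x \<ge> 0" "(\<eta> has_integral 1) UNIV"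
           "closure {x. \<eta> x \<noteq> 0} = cball 0 1"
  shows "\<exists>C>0. \<forall>\<epsilon>. 0 < \<epsilon> \<and> \<epsilon> < \<epsilon>0 \<longrightarrow>
           (\<forall>x\<in>\<Omega>. infdist x (frontier \<Omega>) < (1 + lam) * \<epsilon> \<longrightarrow>
              (\<integral>\<^sup>+ y. ennreal (infdist y (frontier (D \<epsilon>)) powr (- s)
                     * ((1 / \<epsilon>) ^ DIM('a) * \<eta> ((1 / \<epsilon>) *\<^sub>R (x - y)))) \<partial>lborel)
              \<le> ennreal (C * \<epsilon> powr (- s)))"
proof -
  obtain \<rho> where \<rho>: "\<rho> > 0" and ext: "\<And>\<epsilon>. 0 < \<epsilon> \<Longrightarrow> \<epsilon> < \<epsilon>0 \<Longrightarrow> exterior_ball_radius (D \<epsilon>) \<rho>"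
    using Dball by blast
  have \<eta>c: "continuous_on UNIV \<eta>" using smooth_cont[OF \<eta>(1)] .
  have "compact (\<eta> ` cball 0 1)"
    by (intro compact_continuous_image continuous_on_subset[OF \<eta>c]) auto
  then obtain a where a: "\<And>z. z \<in> cball 0 1 \<Longrightarrow> norm (\<eta> z) \<le> a"
    using compact_imp_bounded[of "\<eta> ` cball 0 1"] unfolding bounded_iff by blast
  have cs: "{x. \<eta> x \<noteq> 0} \<subseteq> cball 0 1" using closure_subset[of "{x. \<eta> x \<noteq> 0}"] \<eta>(4) by simp
  have supp: "\<eta> z = 0" if "z \<notin> cball 0 1" for z using cs that by blast
  define M1 where "M1 = max 1 a"
  have M1a: "a \<le> M1" "1 \<le> M1" unfolding M1_def by auto
  have M1: "M1 > 0" "\<And>z. \<eta> z \<le> M1"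
  proof -
    show "M1 > 0" using M1a by linarith
    fix z
    show "\<eta> z \<le> M1"
    proof (cases "z \<in> cball 0 1")
      case True
      hence "norm (\<eta> z) \<le> a" by (rule a)
      hence "\<eta> z \<le> a" by simp
      thus ?thesis using M1a by linarith
    next
      case False
      thus ?thesis using supp M1a by simp
    qed
  qed
  define K0 where "K0 = 4 ^ DIM('a) * 32 * real DIM('a) ^ 2 * (max 1 (4 * real DIM('a) * \<epsilon>0 / \<rho>) + \<epsilon>0 / \<rho>)"
  have K0: "K0 \<ge> 0" unfolding K0_def using \<epsilon>0 \<rho> by (simp add: add_nonneg_nonneg)
  have "(2::real) powr (s - 1) < 2 powr 0" using s by (intro powr_less_mono) auto
  hence q1: "1 - 2 powr (s - 1) > 0" by simp
  define Cint where "Cint = 2 ^ DIM('a) + K0 * 2 powr s / (1 - 2 powr (s - 1))"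
  have Cint: "Cint > 0" unfolding Cint_def using K0 q1 by (simp add: add_pos_nonneg)
  show ?thesis
  proof (intro exI[of _ "M1 * Cint"] conjI allI impI ballI)
    show "M1 * Cint > 0" using M1 Cint by simp
    fix \<epsilon> x assume eps: "0 < \<epsilon> \<and> \<epsilon> < \<epsilon>0"
    define d where "d y = infdist y (frontier (D \<epsilon>))" for y
    have dc: "continuous_on UNIV d" unfolding d_def by (intro continuous_intros)
    have dm[measurable]: "d \<in> borel_measurable lborel"
      using borel_measurable_continuous_onI[OF dc] by (simp add: measurable_lborel1)
    have vol: "emeasure lborel {y \<in> cball x \<epsilon>. 0 < d y \<and> d y < r} \<le> ennreal (K0 * r * \<epsilon> ^ (DIM('a) - 1))"
      if "r > 0" for r
    proof -
      have e1: "0 < \<epsilon>" and e2: "\<epsilon> < \<epsilon>0" using eps by auto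
      have sm: "smooth_domain (D \<epsilon>)" using Dsmooth e1 e2 .
      have ex: "exterior_ball_radius (D \<epsilon>) \<rho>" using ext e1 e2 .
      show ?thesis unfolding d_def K0_def using local_volume[OF sm ex \<rho> e1 e2 that, of x] .
    qed
    have IB: "(\<integral>\<^sup>+ y. ennreal (d y powr (-s)) * indicator (cball x \<epsilon>) y \<partial>lborel)
       \<le> ennreal (Cint * \<epsilon> ^ DIM('a) * \<epsilon> powr (-s))"
      unfolding Cint_def
      by (rule integral_bound[OF dc _ s _ K0 vol]) (use eps in \<open>auto simp: d_def infdist_nonneg\<close>)
    have gm: "(\<lambda>y. ennreal (d y powr (-s)) * indicator (cball x \<epsilon>) y) \<in> borel_measurable lborel"
      by measurable (simp add: pred_def borel_closed)
    define c where "c = M1 * (1 / \<epsilon>) ^ DIM('a)"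
    have c0: "c \<ge> 0" unfolding c_def using M1 eps by simp
    have pw: "ennreal (d y powr (- s) * ((1 / \<epsilon>) ^ DIM('a) * \<eta> ((1 / \<epsilon>) *\<^sub>R (x - y))))
        \<le> ennreal c * (ennreal (d y powr (-s)) * indicator (cball x \<epsilon>) y)" for y
    proof (cases "y \<in> cball x \<epsilon>")
      case True
      have "d y powr (- s) * ((1 / \<epsilon>) ^ DIM('a) * \<eta> ((1 / \<epsilon>) *\<^sub>R (x - y))) \<le> d y powr (- s) * ((1 / \<epsilon>) ^ DIM('a) * M1)"
        using M1(2) eps by (intro mult_left_mono) auto
      also have "\<dots> = c * d y powr (-s)" unfolding c_def by simp
      finally have "ennreal (d y powr (- s) * ((1 / \<epsilon>) ^ DIM('a) * \<eta> ((1 / \<epsilon>) *\<^sub>R (x - y)))) \<le> ennreal (c * d y powr (-s))"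
        by (rule ennreal_leI)
      also have "\<dots> = ennreal c * ennreal (d y powr (-s))" using c0 by (simp add: ennreal_mult)
      finally show ?thesis using True by simp
    next
      case False
      have "(1 / \<epsilon>) *\<^sub>R (x - y) \<notin> cball 0 1"
      proof
        assume "(1 / \<epsilon>) *\<^sub>R (x - y) \<in> cball 0 1"
        hence "norm (x - y) / \<epsilon> \<le> 1" using eps by simp
        hence "dist x y \<le> \<epsilon>" using eps by (simp add: dist_norm divide_le_eq)
        thus False using False by simp
      qed
      hence "\<eta> ((1 / \<epsilon>) *\<^sub>R (x - y)) = 0" by (rule supp)
      thus ?thesis by simp
    qed
    have "(\<integral>\<^sup>+ y. ennreal (infdist y (frontier (D \<epsilon>)) powr (- s) * ((1 / \<epsilon>) ^ DIM('a) * \<eta> ((1 / \<epsilon>) *\<^sub>R (x - y)))) \<partial>lborel)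
        = (\<integral>\<^sup>+ y. ennreal (d y powr (- s) * ((1 / \<epsilon>) ^ DIM('a) * \<eta> ((1 / \<epsilon>) *\<^sub>R (x - y)))) \<partial>lborel)"
      unfolding d_def ..
    also have "\<dots> \<le> (\<integral>\<^sup>+ y. ennreal c * (ennreal (d y powr (-s)) * indicator (cball x \<epsilon>) y) \<partial>lborel)"
      by (intro nn_integral_mono pw)
    also have "\<dots> = ennreal c * (\<integral>\<^sup>+ y. ennreal (d y powr (-s)) * indicator (cball x \<epsilon>) y \<partial>lborel)"
      by (rule nn_integral_cmult[OF gm])
    also have "\<dots> \<le> ennreal c * ennreal (Cint * \<epsilon> ^ DIM('a) * \<epsilon> powr (-s))"
      by (intro mult_left_mono IB) auto
    also have "\<dots> = ennreal (M1 * Cint * \<epsilon> powr (- s))"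
    proof -
      have eq: "c * (Cint * \<epsilon> ^ DIM('a) * \<epsilon> powr (-s)) = M1 * Cint * \<epsilon> powr (- s)"
        unfolding c_def using eps by (simp add: power_one_over field_simps)
      have "ennreal c * ennreal (Cint * \<epsilon> ^ DIM('a) * \<epsilon> powr (-s)) = ennreal (c * (Cint * \<epsilon> ^ DIM('a) * \<epsilon> powr (-s)))"
        by (rule ennreal_mult'[OF c0, symmetric])
      thus ?thesis unfolding eq .
    qed
    finally show "(\<integral>\<^sup>+ y. ennreal (infdist y (frontier (D \<epsilon>)) powr (- s) * ((1 / \<epsilon>) ^ DIM('a) * \<eta> ((1 / \<epsilon>) *\<^sub>R (x - y)))) \<partial>lborel)
        \<le> ennreal (M1 * Cint * \<epsilon> powr (- s))" .
  qed
qed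


end
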